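(* Let $p:[0,1]\to\mathbb{R}_{\ge0}$ be a monotone, continuous, convex pricing function with $p(0)=0$, let $v(x)=\tau x$ with $\tau\ge0$, let $S\subset\mathbb{R}_{\ge0}$ be a finite set with $\tau\in S$, and let $\hat p=\mathrm{disc}(p,S)$. Then for every $b\in\mathbb{R}_{\ge0}$, $r(\hat p\mid v,b)\ge r(p\mid v,b)$.
   Context: Revenue: for a pricing function $q$ and budget $b$, $F=\{x\in[0,1]:q(x)\le b\}$, $u^*=\sup_{x\in F}(v(x)-q(x))$, $\mathrm{Dem}=\{x\in F:v(x)-q(x)=u^*\}$, $r(q\mid v,b)=\sup_{x\in\mathrm{Dem}}q(x)$. For convex $f:[0,1]\to\mathbb{R}$: $f'(x)=\sup_{\delta\in(0,x]}(f(x)-f(x-\delta))/\delta$ for $x>0$, $f'(0)=-\infty$, and $\ell(f\mid\beta)=\max\{x\in[0,1]:f'(x)\le\beta\}$. For non-decreasing $\mathbf{z}\in[0,1]^{k-1}$ and $\boldsymbol\alpha\in\mathbb{R}^k$, with $z_0=0$, $\mathrm{plin}(\mathbf{z},\boldsymbol\alpha)(0)=0$ and for $x>0$, $\mathrm{plin}(\mathbf{z},\boldsymbol\alpha)(x)=\sum_{j=1}^{i-1}\alpha_j(z_j-z_{j-1})+\alpha_i(x-z_{i-1})$, where $i\in[k]$ is largest with $z_{i-1}<x$. For continuous convex $f$ and $S=\{\alpha_1<\dots<\alpha_k\}$: $z_i=\ell(f\mid\alpha_i)$ for $i\in[k-1]$ and $\mathrm{disc}(f,S)=f(0)+\mathrm{plin}(\mathbf{z},\boldsymbol\alpha)$.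 *)

theory Defs
  imports "HOL-Analysis.Analysis" "HOL-Library.Extended_Real"
begin

definition feasible :: "(real \<Rightarrow> real) \<Rightarrow> real \<Rightarrow> real set" where
  "feasible q b = {x \<in> {0..1}. q x \<le> b}"

definition opt_util :: "(real \<Rightarrow> real) \<Rightarrow> (real \<Rightarrow> real) \<Rightarrow> real \<Rightarrow> real" where
  "opt_util q v b = (SUP x\<in>feasible q b. v x - q x)"

definition demand :: "(real \<Rightarrow> real) \<Rightarrow> (real \<Rightarrow> real) \<Rightarrow> real \<Rightarrow> real set" where
  "demand q v b = {x \<in> feasible q b. v x - q x = opt_util q v b}"

definition revenue :: "(real \<Rightarrow> real) \<Rightarrow> (real \<Rightarrow> real) \<Rightarrow> real \<Rightarrow> real" where
  "revenue q v b = (SUP x\<in>demand q v b. q x)"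

definition lder :: "(real \<Rightarrow> real) \<Rightarrow> real \<Rightarrow> ereal" where
  "lder f x = (if x = 0 then -\<infinity>
              else (SUP \<delta>\<in>{0<..x}. ereal ((f x - f (x - \<delta>)) / \<delta>)))"

definition ell :: "(real \<Rightarrow> real) \<Rightarrow> real \<Rightarrow> real" where
  "ell f \<beta> = (GREATEST x. x \<in> {0..1} \<and> lder f x \<le> ereal \<beta>)"

text \<open>Piecewise linear function plin(z, alpha) with k pieces; z indexed 1..k-1, alpha 1..k,
  and z_0 = 0.\<close>

definition plin :: "nat \<Rightarrow> (nat \<Rightarrow> real) \<Rightarrow> (nat \<Rightarrow> real) \<Rightarrow> real \<Rightarrow> real" where
  "plin k z \<alpha> x =
     (let z0 = (\<lambda>i. if i = 0 then 0 else z i) in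
      if x = 0 then 0
      else (let i = (GREATEST i. i \<in> {1..k} \<and> z0 (i - 1) < x) in
            (\<Sum>j=1..i-1. \<alpha> j * (z0 j - z0 (j - 1))) + \<alpha> i * (x - z0 (i - 1))))"

definition disc :: "(real \<Rightarrow> real) \<Rightarrow> real set \<Rightarrow> real \<Rightarrow> real" where
  "disc f S =
     (let k = card S;
          \<alpha> = (\<lambda>i. sorted_list_of_set S ! (i - 1));
          z = (\<lambda>i. ell f (\<alpha> i))
      in (\<lambda>x. f 0 + plin k z \<alpha> x))"

end

theory Submission
  imports Defs
begin


definition PP :: "(real \<Rightarrow> real) \<Rightarrow> real \<Rightarrow> real \<Rightarrow> bool" where
  "PP p \<beta> x \<longleftrightarrow> x \<in> {0..1} \<and> (\<forall>a\<in>{0..1}. a < x \<longrightarrow> p x - p a \<le> \<beta> * (x - a))"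

lemma lder_le_iff:
  assumes "x \<in> {0..1}"
  shows "(x \<in> {0..1} \<and> lder p x \<le> ereal \<beta>) \<longleftrightarrow> PP p \<beta> x"
proof (cases "x = 0")
  case True then show ?thesis using assms by (auto simp: lder_def PP_def)
next
  case False
  have "lder p x \<le> ereal \<beta> \<longleftrightarrow> (\<forall>\<delta>\<in>{0<..x}. (p x - p (x - \<delta>)) / \<delta> \<le> \<beta>)"
    using False by (simp add: lder_def SUP_le_iff)
  also have "\<dots> \<longleftrightarrow> (\<forall>\<delta>\<in>{0<..x}. p x - p (x - \<delta>) \<le> \<beta> * \<delta>)"
    by (auto simp: pos_divide_le_eq mult.commute)
  also have "\<dots> \<longleftrightarrow> (\<forall>a\<in>{0..1}. a < x \<longrightarrow> p x - p a \<le> \<beta> * (x - a))"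
  proof
    assume H: "\<forall>\<delta>\<in>{0<..x}. p x - p (x - \<delta>) \<le> \<beta> * \<delta>"
    show "\<forall>a\<in>{0..1}. a < x \<longrightarrow> p x - p a \<le> \<beta> * (x - a)"
    proof (intro ballI impI)
      fix a assume "a \<in> {0..1}" "a < x"
      then show "p x - p a \<le> \<beta> * (x - a)" using H[rule_format, of "x - a"] by auto
    qed
  next
    assume H: "\<forall>a\<in>{0..1}. a < x \<longrightarrow> p x - p a \<le> \<beta> * (x - a)"
    show "\<forall>\<delta>\<in>{0<..x}. p x - p (x - \<delta>) \<le> \<beta> * \<delta>"
    proof
      fix \<delta> assume "\<delta> \<in> {0<..x}"
      then show "p x - p (x - \<delta>) \<le> \<beta> * \<delta>" using H[rule_format, of "x - \<delta>"] assms by auto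
    qed
  qed
  finally show ?thesis using assms by (auto simp: PP_def)
qed

lemma PP_closed:
  assumes "continuous_on {0..1} p"
  shows "closed {x. PP p \<beta> x}"
proof -
  have eq: "{x. PP p \<beta> x} = {0..1} \<inter> (\<Inter>a\<in>{0..1}. {..a} \<union> {x\<in>{0..1}. p x - \<beta> * x \<le> p a - \<beta> * a})"
    by (auto simp: PP_def algebra_simps) (smt (verit) atLeastAtMost_iff)
  have "continuous_on {0..1} (\<lambda>x. p x - \<beta> * x)"
    by (intro continuous_intros assms)
  then have "closed {x\<in>{0..1}. p x - \<beta> * x \<le> p a - \<beta> * a}" for a
    by (intro continuous_on_closed_Collect_le) (auto intro: continuous_intros)
  then show ?thesis unfolding eq by (intro closed_Int closed_INT ballI closed_Un) auto
qed

lemma ell_eq: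
  assumes "continuous_on {0..1} p"
  shows "PP p \<beta> (ell p \<beta>)" "\<And>y. PP p \<beta> y \<Longrightarrow> y \<le> ell p \<beta>"
proof -
  let ?A = "{x. PP p \<beta> x}"
  have ne: "0 \<in> ?A" by (auto simp: PP_def)
  have bdd: "bdd_above ?A" by (rule bdd_aboveI[of _ 1]) (auto simp: PP_def)
  have inA: "Sup ?A \<in> ?A" using closed_contains_Sup[OF _ bdd PP_closed[OF assms]] ne by blast
  have "ell p \<beta> = Sup ?A"
    unfolding ell_def
  proof (rule Greatest_equality)
    show "Sup ?A \<in> {0..1} \<and> lder p (Sup ?A) \<le> ereal \<beta>"
      using inA lder_le_iff[of "Sup ?A" p \<beta>] by (auto simp: PP_def)
    fix y assume "y \<in> {0..1} \<and> lder p y \<le> ereal \<beta>"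
    then have "y \<in> ?A" using lder_le_iff[of y p \<beta>] by auto
    then show "y \<le> Sup ?A" using bdd by (rule cSup_upper)
  qed
  then show "PP p \<beta> (ell p \<beta>)" using inA by simp
  show "\<And>y. PP p \<beta> y \<Longrightarrow> y \<le> ell p \<beta>" using \<open>ell p \<beta> = Sup ?A\<close> bdd
    by (simp add: cSup_upper)
qed

lemma PP_mono: "PP p \<beta> x \<Longrightarrow> \<beta> \<le> \<beta>' \<Longrightarrow> PP p \<beta>' x"
  unfolding PP_def
  by (smt (verit, del_insts) mult_right_mono)

lemma ell_mono:
  assumes "continuous_on {0..1} p" "\<beta> \<le> \<beta>'"
  shows "ell p \<beta> \<le> ell p \<beta>'"
  using ell_eq[OF assms(1)] PP_mono assms(2) by blast

lemma ell_range: "continuous_on {0..1} p \<Longrightarrow> ell p \<beta> \<in> {0..1}"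
  using ell_eq(1) PP_def by blast

lemma slope_bound:
  assumes cv: "convex_on {0..1} p" and w: "PP p \<beta> w"
    and ab: "0 \<le> a" "a \<le> b" "b \<le> w"
  shows "p b - p a \<le> \<beta> * (b - a)"
proof (cases "a = b")
  case True then show ?thesis by simp
next
  case False
  then have ab': "a < b" using ab by simp
  have w1: "w \<le> 1" and wa: "p w - p a \<le> \<beta> * (w - a)" using w ab' ab by (auto simp: PP_def)
  show ?thesis
  proof (cases "b = w")
    case True then show ?thesis using wa by simp
  next
    case False
    then have bw: "b < w" using ab by simp
    define t where "t = (b - a) / (w - a)"
    have t0: "0 \<le> t" "t \<le> 1" using ab' bw by (auto simp: t_def)
    have "t * (w - a) = b - a" using ab' bw by (simp add: t_def)
    then have bt: "b = (1 - t) * a + t * w" by (simp add: algebra_simps)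
    have "p b \<le> (1 - t) * p a + t * p w"
      using convex_onD[OF cv, of t a w] t0 ab w1 bw unfolding bt by auto
    then have "p b - p a \<le> t * (p w - p a)" by (simp add: algebra_simps)
    also have "\<dots> \<le> t * (\<beta> * (w - a))" using wa t0 by (intro mult_left_mono) auto
    also have "\<dots> = \<beta> * (b - a)" using ab' bw by (simp add: t_def field_simps)
    finally show ?thesis .
  qed
qed



lemma three_slope:
  assumes cv: "convex_on {0..1} p" and "0 \<le> a" "a < x" "x < z" "z \<le> 1"
  shows "(p x - p a) * (z - x) \<le> (p z - p x) * (x - a)"
proof -
  define t where "t = (x - a) / (z - a)"
  have t0: "0 \<le> t" "t \<le> 1" using assms by (auto simp: t_def)
  have tz: "t * (z - a) = x - a" using assms by (simp add: t_def)
  then have tz2: "(z - a) * (1 - t) = z - x" by (simp add: algebra_simps)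
  from tz have bt: "x = (1 - t) * a + t * z" by (simp add: algebra_simps)
  have "p x \<le> (1 - t) * p a + t * p z"
    using convex_onD[OF cv, of t a z] t0 assms unfolding bt by auto
  then have "(z - a) * p x \<le> (z - a) * ((1 - t) * p a + t * p z)"
    using assms by (intro mult_left_mono) auto
  also have "\<dots> = ((z - a) * (1 - t)) * p a + (t * (z - a)) * p z"
    by (simp add: algebra_simps)
  also have "\<dots> = (z - x) * p a + (x - a) * p z"
    by (simp only: tz tz2)
  finally show ?thesis by (simp add: algebra_simps)
qed

lemma strict_after:
  assumes cont: "continuous_on {0..1} p" and cv: "convex_on {0..1} p"
    and c: "c = ell p \<tau>" and y: "c < y" "y \<le> 1"
  shows "\<tau> * y - p y < \<tau> * c - p c"
proof -
  have c01: "c \<in> {0..1}" using ell_range[OF cont] c by simp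
  have A: "p z - p x' > \<tau> * (z - x')" if "c < x'" "x' < z" "z \<le> 1" for x' z
  proof -
    have x01: "x' \<in> {0..1}" using that c01 by auto
    have "\<not> PP p \<tau> x'" using ell_eq(2)[OF cont, of \<tau> x'] c that by auto
    then obtain a where a: "a \<in> {0..1}" "a < x'" "p x' - p a > \<tau> * (x' - a)"
      using x01 by (auto simp: PP_def not_le)
    have "(p x' - p a) * (z - x') \<le> (p z - p x') * (x' - a)"
      using three_slope[OF cv, of a x' z] a that by auto
    moreover have "\<tau> * (x' - a) * (z - x') < (p x' - p a) * (z - x')"
      using a that by (intro mult_strict_right_mono) auto
    ultimately have "\<tau> * (z - x') * (x' - a) < (p z - p x') * (x' - a)"
      by (simp add: algebra_simps)
    then show ?thesis using a by (simp add: mult_less_cancel_right)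
  qed
  define m where "m = (c + y) / 2"
  have m: "c < m" "m < y" using y by (auto simp: m_def)
  have h1: "p y - p m > \<tau> * (y - m)" using A[OF m y(2)] .
  have "continuous_on {c..m} p" by (rule continuous_on_subset[OF cont]) (use c01 m y in auto)
  then have "(p \<longlongrightarrow> p c) (at c within {c..m})" using m by (simp add: continuous_on_def)
  then have "(p \<longlongrightarrow> p c) (at_right c)" using at_within_Icc_at_right[OF m(1)] by simp
  then have lim: "((\<lambda>x'. p m - p x' - \<tau> * (m - x')) \<longlongrightarrow> p m - p c - \<tau> * (m - c)) (at_right c)"
    by (intro tendsto_intros)
  have ev: "eventually (\<lambda>x'. 0 \<le> p m - p x' - \<tau> * (m - x')) (at_right c)"
    unfolding eventually_at_right_field
    using A[of _ m] m y by (intro exI[of _ m]) (auto intro: less_imp_le)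
  have "0 \<le> p m - p c - \<tau> * (m - c)"
    using tendsto_lowerbound[OF lim ev] by simp
  with h1 show ?thesis by (simp add: algebra_simps)
qed

lemma revenue_formula:
  fixes q :: "real \<Rightarrow> real"
  assumes cont: "continuous_on {0..1} q" and mono: "mono_on {0..1} q" and q0: "q 0 = 0"
    and b: "0 \<le> b" and c: "c \<in> {0..1}"
    and up: "\<And>x y. 0 \<le> x \<Longrightarrow> x \<le> y \<Longrightarrow> y \<le> c \<Longrightarrow> \<tau> * x - q x \<le> \<tau> * y - q y"
    and down: "\<And>y. c < y \<Longrightarrow> y \<le> 1 \<Longrightarrow> \<tau> * y - q y < \<tau> * c - q c"
  shows "revenue q (\<lambda>x. \<tau> * x) b = min (q c) b"
proof -
  let ?F = "feasible q b"
  have F: "?F = {x \<in> {0..1}. q x \<le> (\<lambda>_. b) x}" by (simp add: feasible_def)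
  have clF: "closed ?F" unfolding F
    by (intro continuous_on_closed_Collect_le cont continuous_on_const) auto
  have neF: "0 \<in> ?F" using b q0 by (simp add: feasible_def)
  have bddF: "bdd_above ?F" by (rule bdd_aboveI[of _ 1]) (auto simp: feasible_def)
  define xb where "xb = Sup ?F"
  have xbF: "xb \<in> ?F" unfolding xb_def using closed_contains_Sup[OF _ bddF clF] neF by blast
  have leXb: "x \<le> xb" if "x \<in> ?F" for x unfolding xb_def using that bddF by (rule cSup_upper)
  define xs where "xs = min c xb"
  have xb01: "xb \<in> {0..1}" "q xb \<le> b" using xbF by (auto simp: feasible_def)
  have xs01: "xs \<in> {0..1}" using xb01 c by (auto simp: xs_def)
  have qxs: "q xs \<le> q xb" using mono xs01 xb01 by (auto simp: xs_def mono_on_def)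
  have xsF: "xs \<in> ?F" using xs01 qxs xb01 by (auto simp: feasible_def)
  have maxu: "\<tau> * x - q x \<le> \<tau> * xs - q xs" if "x \<in> ?F" for x
  proof (cases "x \<le> c")
    case True
    then show ?thesis using up[of x xs] leXb[OF that] that c by (auto simp: xs_def feasible_def)
  next
    case False
    then have "xs = c" using leXb[OF that] by (auto simp: xs_def)
    then show ?thesis using down[of x] False that by (force simp: feasible_def)
  qed
  have ou: "opt_util q (\<lambda>x. \<tau> * x) b = \<tau> * xs - q xs"
    unfolding opt_util_def using xsF maxu by (intro cSup_eq_maximum) auto
  let ?D = "demand q (\<lambda>x. \<tau> * x) b"
  have xsD: "xs \<in> ?D" using xsF ou by (simp add: demand_def)
  have leD: "q x \<le> q xs" if "x \<in> ?D" for x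
  proof -
    have xF: "x \<in> ?F" and ux: "\<tau> * x - q x = \<tau> * xs - q xs" using that ou by (auto simp: demand_def)
    have "x \<le> c"
    proof (rule ccontr)
      assume "\<not> x \<le> c"
      then have "xs = c" using leXb[OF xF] by (auto simp: xs_def)
      then show False using down[of x] \<open>\<not> x \<le> c\<close> xF ux by (force simp: feasible_def)
    qed
    then have "x \<le> xs" using leXb[OF xF] by (auto simp: xs_def)
    then show ?thesis using mono xF xs01 by (auto simp: mono_on_def feasible_def)
  qed
  have rev: "revenue q (\<lambda>x. \<tau> * x) b = q xs"
    unfolding revenue_def using xsD leD by (intro cSup_eq_maximum) auto
  show ?thesis
  proof (cases "c \<le> xb")
    case True
    then have "xs = c" by (simp add: xs_def)
    then show ?thesis using rev qxs xb01 by simp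
  next
    case False
    then have xsb: "xs = xb" by (simp add: xs_def)
    have "\<not> q c \<le> b" using False leXb[of c] c by (auto simp: feasible_def)
    then have qc: "b \<le> q c" by simp
    have "continuous_on {0..c} q" by (rule continuous_on_subset[OF cont]) (use c in auto)
    then obtain x where x: "0 \<le> x" "x \<le> c" "q x = b"
      using IVT'[of q 0 b c] q0 b qc c by auto
    then have "x \<in> ?F" using c by (auto simp: feasible_def)
    then have "x \<le> xb" by (rule leXb)
    then have "q x \<le> q xb" using mono_onD[OF mono, of x xb] xb01 x c by auto
    then show ?thesis using rev xsb x xb01 qc by simp
  qed
qed



lemma telescope: "(\<Sum>i=1..(k::nat). f i - f (i - 1)) = f k - (f 0 :: real)"
  by (induction k) (auto simp: sum.cl_ivl_Suc)


context
  fixes k :: nat and Z \<alpha> :: "nat \<Rightarrow> real"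
  assumes k1: "1 \<le> k" and Z0: "Z 0 = 0" and Zk: "Z k = 1"
    and Zmono: "\<And>i j. i \<le> j \<Longrightarrow> j \<le> k \<Longrightarrow> Z i \<le> Z j"
begin

definition len where "len i y = min y (Z i) - min y (Z (i - 1))"
definition G where "G y = (\<Sum>i=1..k. \<alpha> i * len i y)"

lemma Zrange: "i \<le> k \<Longrightarrow> Z i \<in> {0..1}"
  using Zmono[of 0 i] Zmono[of i k] Z0 Zk by auto

lemma len_mono: "i \<in> {1..k} \<Longrightarrow> y \<le> y' \<Longrightarrow> len i y \<le> len i y'"
  using Zmono[of "i - 1" i] by (auto simp: len_def min_def)

lemma len_nonneg: "i \<in> {1..k} \<Longrightarrow> 0 \<le> len i y"
  using Zmono[of "i - 1" i] by (auto simp: len_def min_def)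

lemma len_sum: "y \<in> {0..1} \<Longrightarrow> (\<Sum>i=1..k. len i y) = y"
  unfolding len_def using telescope[of "\<lambda>i. min y (Z i)" k] Z0 Zk by auto

lemma G0: "G 0 = 0"
  unfolding G_def len_def using Zrange by (auto intro!: sum.neutral simp: min_def)

lemma G_cont: "continuous_on A G"
  unfolding G_def len_def by (intro continuous_intros)

lemma G_mono: "(\<And>i. i \<in> {1..k} \<Longrightarrow> 0 \<le> \<alpha> i) \<Longrightarrow> mono_on A G"
  unfolding G_def by (intro mono_onI sum_mono mult_left_mono len_mono) auto

lemma util_rep: "y \<in> {0..1} \<Longrightarrow> \<tau> * y - G y = (\<Sum>i=1..k. (\<tau> - \<alpha> i) * len i y)"
proof -
  assume y: "y \<in> {0..1}"
  have "\<tau> * y = \<tau> * (\<Sum>i=1..k. len i y)" using len_sum[OF y] by simp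
  also have "\<dots> = (\<Sum>i=1..k. \<tau> * len i y)" by (rule sum_distrib_left)
  finally show ?thesis unfolding G_def by (simp add: algebra_simps sum_subtractf)
qed

lemma plin_eq:
  assumes zZ: "\<And>i. 1 \<le> i \<Longrightarrow> i < k \<Longrightarrow> z i = Z i" and x: "x \<in> {0..1}"
  shows "plin k z \<alpha> x = G x"
proof (cases "x = 0")
  case True then show ?thesis using G0 by (simp add: plin_def)
next
  case False
  then have xpos: "0 < x" using x by auto
  define z0 where "z0 = (\<lambda>i. if i = 0 then 0 else z i)"
  have z0Z: "z0 i = Z i" if "i < k" for i using zZ[of i] that Z0 by (auto simp: z0_def)
  define P where "P = (\<lambda>i. i \<in> {1..k} \<and> z0 (i - 1) < x)"
  define I where "I = Greatest P"
  have P1: "P 1" using k1 xpos by (auto simp: P_def z0_def)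
  have bnd: "\<forall>y. P y \<longrightarrow> y \<le> k" by (auto simp: P_def)
  have PI: "P I" unfolding I_def using GreatestI_nat[of P 1 k] P1 bnd by blast
  have Imax: "\<And>i. P i \<Longrightarrow> i \<le> I" unfolding I_def using Greatest_le_nat bnd by blast
  have I1k: "1 \<le> I" "I \<le> k" using PI by (auto simp: P_def)
  have ZI1: "Z (I - 1) < x" using PI z0Z[of "I - 1"] I1k by (auto simp: P_def)
  have xZI: "x \<le> Z I"
  proof (cases "I = k")
    case True then show ?thesis using Zk x by auto
  next
    case False
    then have "\<not> P (I + 1)" using Imax by fastforce
    then show ?thesis using False I1k z0Z[of I] by (auto simp: P_def)
  qed
  have lhs: "plin k z \<alpha> x = (\<Sum>j=1..I-1. \<alpha> j * (Z j - Z (j - 1))) + \<alpha> I * (x - Z (I - 1))"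
  proof -
    have "plin k z \<alpha> x = (\<Sum>j=1..I-1. \<alpha> j * (z0 j - z0 (j - 1))) + \<alpha> I * (x - z0 (I - 1))"
      using False unfolding plin_def Let_def z0_def[symmetric] P_def[symmetric] I_def[symmetric]
      by simp
    also have "\<dots> = (\<Sum>j=1..I-1. \<alpha> j * (Z j - Z (j - 1))) + \<alpha> I * (x - Z (I - 1))"
      using I1k by (intro arg_cong2[where f="(+)"] sum.cong refl) (auto simp: z0Z)
    finally show ?thesis .
  qed
  have split: "{1..k} = {1..I-1} \<union> ({I} \<union> {I+1..k})" using I1k by auto
  have "G x = (\<Sum>j=1..I-1. \<alpha> j * len j x) + (\<alpha> I * len I x + (\<Sum>j=I+1..k. \<alpha> j * len j x))"
    unfolding G_def split by (subst sum.union_disjoint; auto)+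
  also have "(\<Sum>j=1..I-1. \<alpha> j * len j x) = (\<Sum>j=1..I-1. \<alpha> j * (Z j - Z (j - 1)))"
  proof (intro sum.cong refl)
    fix j assume j: "j \<in> {1..I-1}"
    have "Z j \<le> Z (I - 1)" "Z (j - 1) \<le> Z (I - 1)" using j I1k by (auto intro: Zmono)
    then show "\<alpha> j * len j x = \<alpha> j * (Z j - Z (j - 1))" using ZI1 by (auto simp: len_def)
  qed
  also have "(\<Sum>j=I+1..k. \<alpha> j * len j x) = 0"
  proof (intro sum.neutral ballI)
    fix j assume j: "j \<in> {I+1..k}"
    have "Z I \<le> Z (j - 1)" "Z (j - 1) \<le> Z j" using j by (auto intro: Zmono)
    then show "\<alpha> j * len j x = 0" using xZI by (auto simp: len_def)
  qed
  also have "len I x = x - Z (I - 1)" using xZI ZI1 by (auto simp: len_def)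
  finally show ?thesis using lhs by simp
qed

lemma G_up:
  assumes m: "m \<in> {1..k}" and al: "\<And>i. i \<in> {1..k} \<Longrightarrow> i \<le> m \<Longrightarrow> \<alpha> i \<le> \<tau>"
    and xy: "0 \<le> x" "x \<le> y" "y \<le> Z m"
  shows "\<tau> * x - G x \<le> \<tau> * y - G y"
proof -
  have Zm: "Z m \<le> 1" using Zrange[of m] m by auto
  have "(\<Sum>i=1..k. (\<tau> - \<alpha> i) * len i x) \<le> (\<Sum>i=1..k. (\<tau> - \<alpha> i) * len i y)"
  proof (intro sum_mono)
    fix i assume i: "i \<in> {1..k}"
    show "(\<tau> - \<alpha> i) * len i x \<le> (\<tau> - \<alpha> i) * len i y"
    proof (cases "i \<le> m")
      case True
      then show ?thesis using al[OF i] len_mono[OF i xy(2)] by (intro mult_left_mono) auto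
    next
      case False
      have "Z m \<le> Z (i - 1)" "Z (i - 1) \<le> Z i" using False i by (auto intro: Zmono)
      then have "len i x = len i y" using xy by (auto simp: len_def)
      then show ?thesis by simp
    qed
  qed
  then show ?thesis using util_rep[of x \<tau>] util_rep[of y \<tau>] xy Zm by auto
qed

lemma G_down:
  assumes m: "m \<in> {1..k}" and al: "\<And>i. i \<in> {1..k} \<Longrightarrow> m < i \<Longrightarrow> \<alpha> (m + 1) \<le> \<alpha> i"
    and tau: "\<tau> < \<alpha> (m + 1)"
    and y: "Z m < y" "y \<le> 1"
  shows "\<tau> * y - G y < \<tau> * Z m - G (Z m)"
proof -
  have Zm: "Z m \<in> {0..1}" using Zrange[of m] m by auto
  have "(\<Sum>i=1..k. (\<tau> - \<alpha> i) * len i y) - (\<Sum>i=1..k. (\<tau> - \<alpha> i) * len i (Z m))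
      = (\<Sum>i=1..k. (\<tau> - \<alpha> i) * (len i y - len i (Z m)))"
    by (simp only: sum_subtractf[symmetric] right_diff_distrib)
  also have "\<dots> \<le> (\<Sum>i=1..k. (\<tau> - \<alpha> (m + 1)) * (len i y - len i (Z m)))"
  proof (intro sum_mono)
    fix i assume i: "i \<in> {1..k}"
    show "(\<tau> - \<alpha> i) * (len i y - len i (Z m)) \<le> (\<tau> - \<alpha> (m + 1)) * (len i y - len i (Z m))"
    proof (cases "i \<le> m")
      case True
      have "Z (i - 1) \<le> Z i" "Z i \<le> Z m" using True i m by (auto intro: Zmono)
      then have "len i y = len i (Z m)" using y by (auto simp: len_def)
      then show ?thesis by simp
    next
      case False
      have "0 \<le> len i y - len i (Z m)" using len_mono[OF i, of "Z m" y] y by auto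
      then show ?thesis using al[OF i] False by (intro mult_right_mono) auto
    qed
  qed
  also have "\<dots> = (\<tau> - \<alpha> (m + 1)) * (y - Z m)"
    using len_sum[of y] len_sum[of "Z m"] Zm y
    by (simp add: sum_distrib_left[symmetric] sum_subtractf)
  also have "\<dots> < 0" using tau y by (intro mult_neg_pos) auto
  finally show ?thesis using util_rep[of y \<tau>] util_rep[of "Z m" \<tau>] y Zm by auto
qed

end



theorem mainTheorem17:
  fixes p :: "real \<Rightarrow> real" and \<tau> :: real and S :: "real set" and b :: real
  assumes "mono_on {0..1} p"
    and "continuous_on {0..1} p"
    and "convex_on {0..1} p"
    and "\<forall>x\<in>{0..1}. p x \<ge> 0"
    and "p 0 = 0"
    and "\<tau> \<ge> 0"
    and "finite S" and "S \<subseteq> {0..}" and "\<tau> \<in> S"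
    and "b \<ge> 0"
  shows "revenue (disc p S) (\<lambda>x. \<tau> * x) b \<ge> revenue p (\<lambda>x. \<tau> * x) b"
proof -
  note pmono = assms(1) and cont = assms(2) and cv = assms(3) and p0 = assms(5)
    and fin = assms(7) and Spos = assms(8) and tS = assms(9) and b = assms(10)
  define xs where "xs = sorted_list_of_set S"
  define k where "k = card S"
  define \<alpha> where "\<alpha> = (\<lambda>i. xs ! (i - 1))"
  define z where "z = (\<lambda>i. ell p (\<alpha> i))"
  define Z where "Z = (\<lambda>i. if i = 0 then 0 else if i < k then ell p (\<alpha> i) else (1::real))"
  have lenxs: "length xs = k" using fin by (simp add: xs_def k_def)
  have setxs: "set xs = S" using fin by (simp add: xs_def)
  have k1: "1 \<le> k" using tS fin by (simp add: k_def Suc_le_eq card_gt_0_iff; blast)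
  have srt: "sorted_wrt (<) xs" unfolding xs_def by (rule strict_sorted_list_of_set)
  have alt: "\<alpha> i < \<alpha> j" if "1 \<le> i" "i < j" "j \<le> k" for i j
    using srt that lenxs by (auto simp: sorted_wrt_iff_nth_less \<alpha>_def)
  have ale: "\<alpha> i \<le> \<alpha> j" if "1 \<le> i" "i \<le> j" "j \<le> k" for i j
    using alt[of i j] that by (cases "i = j") auto
  have aS: "\<alpha> i \<in> S" if "i \<in> {1..k}" for i
    using that lenxs setxs by (auto simp: \<alpha>_def)
  have apos: "0 \<le> \<alpha> i" if "i \<in> {1..k}" for i using aS[OF that] Spos by auto
  obtain j where j: "j < k" "xs ! j = \<tau>" using tS setxs lenxs by (auto simp: in_set_conv_nth)
  define m where "m = j + 1"
  have m1: "m \<in> {1..k}" using j(1) unfolding m_def by simp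
  have m2: "\<alpha> m = \<tau>" using j(2) unfolding m_def \<alpha>_def by simp
  note m = m1 m2
  have Z0: "Z 0 = 0" and Zk: "Z k = 1" using k1 by (auto simp: Z_def)
  have Zmono: "Z i \<le> Z j" if "i \<le> j" "j \<le> k" for i j
  proof -
    have ij: "i \<le> j" "j \<le> k" by fact+
    consider "i = 0" | "j = k" | "1 \<le> i" "j < k" using ij by fastforce
    then show ?thesis
    proof cases
      case 1 then show ?thesis using ell_range[OF cont] by (auto simp: Z_def)
    next
      case 2 then show ?thesis using ell_range[OF cont] k1 by (auto simp: Z_def)
    next
      case 3 then show ?thesis using ell_mono[OF cont ale[of i j]] that by (auto simp: Z_def)
    qed
  qed
  note ctx = k1 Z0 Zk Zmono
  have zZ: "z i = Z i" if "1 \<le> i" "i < k" for i using that by (simp add: z_def Z_def)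
  have discG: "disc p S x = G k Z \<alpha> x" if "x \<in> {0..1}" for x
  proof -
    have "disc p S x = p 0 + plin k z \<alpha> x"
      unfolding disc_def Let_def k_def[symmetric] xs_def[symmetric] \<alpha>_def[symmetric] z_def[symmetric]
      ..
    then show ?thesis using plin_eq[OF ctx zZ that] p0 by simp
  qed
  define c where "c = ell p \<tau>"
  have c01: "c \<in> {0..1}" using ell_range[OF cont] by (simp add: c_def)
  have PPc: "PP p \<tau> c" using ell_eq(1)[OF cont] by (simp add: c_def)
  have revp: "revenue p (\<lambda>x. \<tau> * x) b = min (p c) b"
  proof (rule revenue_formula[OF cont pmono p0 b c01])
    fix x y :: real assume "0 \<le> x" "x \<le> y" "y \<le> c"
    then show "\<tau> * x - p x \<le> \<tau> * y - p y"
      using slope_bound[OF cv PPc, of x y] by (simp add: algebra_simps)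
  next
    fix y assume "c < y" "y \<le> 1"
    then show "\<tau> * y - p y < \<tau> * c - p c" using strict_after[OF cont cv c_def] by blast
  qed
  define ch where "ch = Z m"
  have ch01: "ch \<in> {0..1}" using Zrange[OF ctx, of m] m by (auto simp: ch_def)
  have revq: "revenue (disc p S) (\<lambda>x. \<tau> * x) b = min (disc p S ch) b"
  proof (rule revenue_formula[OF _ _ _ b ch01])
    show "continuous_on {0..1} (disc p S)"
      using G_cont[OF ctx] discG by (subst continuous_on_cong[OF refl]) auto
    show "mono_on {0..1} (disc p S)"
      using G_mono[OF ctx, of \<alpha> "{0..1}"] apos discG by (auto simp: mono_on_def)
    show "disc p S 0 = 0" using discG[of 0] G0[OF ctx] by simp
  next
    fix x y :: real assume xy: "0 \<le> x" "x \<le> y" "y \<le> ch"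
    then have "x \<in> {0..1}" "y \<in> {0..1}" using ch01 by auto
    then show "\<tau> * x - disc p S x \<le> \<tau> * y - disc p S y"
      using G_up[OF ctx m(1), of \<alpha> \<tau> x y] xy discG ale[of _ m] m unfolding ch_def by auto
  next
    fix y assume y: "ch < y" "y \<le> 1"
    have "m \<noteq> k" using y Zk by (auto simp: ch_def)
    then have mk: "m + 1 \<le> k" using m by auto
    have "\<tau> < \<alpha> (m + 1)" using alt[of m "m + 1"] m mk by auto
    then show "\<tau> * y - disc p S y < \<tau> * ch - disc p S ch"
      using G_down[OF ctx m(1), of \<alpha> \<tau> y] y discG[of y] discG[of ch] ch01 ale[of "m + 1"] mk
      unfolding ch_def by auto
  qed
  have pleG: "p y \<le> G k Z \<alpha> y" if y: "y \<in> {0..1}" "y \<le> ell p (\<alpha> k)" for y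
  proof -
    have "p y = (\<Sum>i=1..k. p (min y (Z i)) - p (min y (Z (i - 1))))"
      using telescope[of "\<lambda>i. p (min y (Z i))" k] Z0 Zk y p0 by auto
    also have "\<dots> \<le> (\<Sum>i=1..k. \<alpha> i * len Z i y)"
    proof (intro sum_mono)
      fix i assume i: "i \<in> {1..k}"
      have PPi: "PP p (\<alpha> i) (ell p (\<alpha> i))" using ell_eq(1)[OF cont] .
      have le: "min y (Z i) \<le> ell p (\<alpha> i)"
        using y i by (cases "i < k") (auto simp: Z_def)
      have "Z (i - 1) \<le> Z i" using i by (intro Zmono) auto
      moreover have "0 \<le> Z (i - 1)" using Zrange[OF ctx, of "i - 1"] i by auto
      ultimately show "p (min y (Z i)) - p (min y (Z (i - 1))) \<le> \<alpha> i * len Z i y"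
        using slope_bound[OF cv PPi, of "min y (Z (i - 1))" "min y (Z i)"] le y
        by (auto simp: len_def[OF ctx])
    qed
    finally show ?thesis by (simp add: G_def[OF ctx])
  qed
  have cle: "c \<le> ell p (\<alpha> k)" unfolding c_def using ell_mono[OF cont, of \<tau> "\<alpha> k"] ale[of m k] m by auto
  have cch: "c \<le> ch"
  proof (cases "m < k")
    case True then show ?thesis using m by (simp add: ch_def Z_def c_def)
  next
    case False then have "m = k" using m by auto
    then show ?thesis using Zk c01 by (simp add: ch_def)
  qed
  have "p c \<le> G k Z \<alpha> c" using pleG[OF c01 cle] .
  also have "\<dots> \<le> G k Z \<alpha> ch"
    using G_mono[OF ctx, of \<alpha> "{0..1}"] apos c01 ch01 cch by (auto simp: mono_on_def)
  also have "\<dots> = disc p S ch" using discG[OF ch01] by simp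
  finally have "p c \<le> disc p S ch" .
  then show ?thesis using revp revq by simp
qed

end
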